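(* For every integer $q\ge 3$, the length (number of edges) of a longest path in the mirror full binary tree $M_q$ is exactly $2q^2$.
   Context: Let $B_q$ be a full binary tree of height $q$ with vertices $b_{\ell,1},\dots,b_{\ell,2^\ell}$ on level $\ell\in\{0,\dots,q\}$, where for $\ell<q$ the vertex $b_{\ell,i}$ is adjacent to its children $b_{\ell+1,2i-1}$ and $b_{\ell+1,2i}$; let $R_q$ be a disjoint copy with vertices $r_{\ell,i}$ defined analogously. The mirror full binary tree $M_q$ is the graph obtained from the disjoint union of $B_q$ and $R_q$ by identifying $b_{q,i}$ with $r_{q,i}$ for every $i\in\{1,\dots,2^q\}$. A path is a sequence of distinct vertices with consecutive vertices adjacent; its length is its number of edges. *)

theory Defs
  imports Main
begin

text \<open>Vertices of the disjoint union B_q + R_q: (tree, level, index), index in 1..2^level.\<close>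
datatype tree_side = Blue | Red

type_synonym mvert = "tree_side \<times> nat \<times> nat"

text \<open>Quotient map identifying b_{q,i} with r_{q,i}: leaves are represented by their blue copy.\<close>
definition canon :: "nat \<Rightarrow> mvert \<Rightarrow> mvert" where
  "canon q v = (case v of (s, l, i) \<Rightarrow> if l = q then (Blue, l, i) else (s, l, i))"

definition union_verts :: "nat \<Rightarrow> mvert set" where
  "union_verts q = {(s, l, i). l \<le> q \<and> 1 \<le> i \<and> i \<le> 2 ^ l}"

definition mirror_verts :: "nat \<Rightarrow> mvert set" where
  "mirror_verts q = canon q ` union_verts q"

definition mirror_adj :: "nat \<Rightarrow> mvert \<Rightarrow> mvert \<Rightarrow> bool" where
  "mirror_adj q u v \<longleftrightarrow>
     (\<exists>s l i j. l < q \<and> 1 \<le> i \<and> i \<le> 2 ^ l \<and> (j = 2 * i - 1 \<or> j = 2 * i) \<and>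
        ({u, v} = {canon q (s, l, i), canon q (s, Suc l, j)}))"

definition mirror_path :: "nat \<Rightarrow> mvert list \<Rightarrow> bool" where
  "mirror_path q p \<longleftrightarrow> p \<noteq> [] \<and> distinct p \<and> set p \<subseteq> mirror_verts q \<and>
     (\<forall>k. Suc k < length p \<longrightarrow> mirror_adj q (p ! k) (p ! Suc k))"

definition path_len :: "'a list \<Rightarrow> nat" where
  "path_len p = length p - 1"

end

theory Submission
  imports Defs
begin

fun wk :: "('a \<Rightarrow> 'a \<Rightarrow> bool) \<Rightarrow> 'a list \<Rightarrow> bool" where
  "wk A [] = True"
| "wk A [x] = True"
| "wk A (x # y # xs) = (A x y \<and> wk A (y # xs))"

lemma wk_Cons: "wk A (x # xs) \<longleftrightarrow> wk A xs \<and> (xs \<noteq> [] \<longrightarrow> A x (hd xs))"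
  by (cases xs) auto

lemma wk_append: "wk A (xs @ ys) \<longleftrightarrow> wk A xs \<and> wk A ys \<and> (xs \<noteq> [] \<longrightarrow> ys \<noteq> [] \<longrightarrow> A (last xs) (hd ys))"
  by (induction xs) (auto simp: wk_Cons)

lemma wk_rev: assumes "\<And>x y. A x y \<Longrightarrow> A y x" shows "wk A (rev xs) = wk A xs"
  by (induction xs) (auto simp: wk_append wk_Cons last_rev assms hd_rev)

lemma wk_nth: "wk A xs \<longleftrightarrow> (\<forall>k. Suc k < length xs \<longrightarrow> A (xs!k) (xs!Suc k))"
proof (induction xs)
  case (Cons x xs)
  show ?case
  proof (cases xs)
    case Nil then show ?thesis by simp
  next
    case (Cons y ys)
    show ?thesis
    proof
      assume W: "wk A (x # xs)"
      then have axy: "A x y" and wxs: "wk A xs" using Cons by auto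
      show "\<forall>k. Suc k < length (x # xs) \<longrightarrow> A ((x # xs) ! k) ((x # xs) ! Suc k)"
      proof (intro allI impI)
        fix k assume k: "Suc k < length (x # xs)"
        show "A ((x # xs) ! k) ((x # xs) ! Suc k)"
        proof (cases k)
          case 0 then show ?thesis using axy Cons by simp
        next
          case (Suc k') then show ?thesis using Cons.IH wxs k by simp
        qed
      qed
    next
      assume H: "\<forall>k. Suc k < length (x # xs) \<longrightarrow> A ((x # xs) ! k) ((x # xs) ! Suc k)"
      have "A x y" using H[rule_format, of 0] Cons by simp
      moreover have "\<forall>k. Suc k < length xs \<longrightarrow> A (xs ! k) (xs ! Suc k)"
        using H by (metis Suc_less_eq length_Cons nth_Cons_Suc)
      ultimately show "wk A (x # xs)" using Cons.IH Cons by simp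
    qed
  qed
qed simp

lemma mirror_path_wk: "mirror_path q p \<longleftrightarrow> p \<noteq> [] \<and> distinct p \<and> set p \<subseteq> mirror_verts q \<and> wk (mirror_adj q) p"
  unfolding mirror_path_def wk_nth by simp

lemma canon_eq: "canon q (s,l,i) = (if l = q then (Blue,l,i) else (s,l,i))"
  by (simp add: canon_def)

lemma mv_iff: "(s,l,i) \<in> mirror_verts q \<longleftrightarrow> l \<le> q \<and> 1 \<le> i \<and> i \<le> 2^l \<and> (l = q \<longrightarrow> s = Blue)"
proof
  assume "(s,l,i) \<in> mirror_verts q"
  then obtain s' l' i' where x: "(s',l',i') \<in> union_verts q" "(s,l,i) = canon q (s',l',i')"
    unfolding mirror_verts_def by force
  have u: "l' \<le> q" "1 \<le> i'" "i' \<le> 2^l'" using x(1) by (auto simp: union_verts_def)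
  show "l \<le> q \<and> 1 \<le> i \<and> i \<le> 2^l \<and> (l = q \<longrightarrow> s = Blue)"
  proof (cases "l' = q")
    case True then show ?thesis using x(2) u by (simp add: canon_eq)
  next
    case False then show ?thesis using x(2) u by (simp add: canon_eq)
  qed
next
  assume "l \<le> q \<and> 1 \<le> i \<and> i \<le> 2^l \<and> (l = q \<longrightarrow> s = Blue)"
  then have "canon q (s,l,i) = (s,l,i)" "(s,l,i) \<in> union_verts q"
    by (auto simp: canon_eq union_verts_def)
  then show "(s,l,i) \<in> mirror_verts q" unfolding mirror_verts_def by (metis image_eqI)
qed

lemma mirror_adj_sym: "mirror_adj q u v \<Longrightarrow> mirror_adj q v u"
proof -
  assume "mirror_adj q u v"
  moreover have "{v,u} = {u,v}" by (rule insert_commute)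
  ultimately show ?thesis unfolding mirror_adj_def by simp
qed

definition blk :: "nat \<Rightarrow> nat \<Rightarrow> nat \<Rightarrow> mvert set" where
  "blk q l i = {v \<in> mirror_verts q. l \<le> fst (snd v) \<and> (snd (snd v) - 1) div 2^(fst (snd v) - l) = i - 1}"

lemma blk_iff: "(s,l',i') \<in> blk q l i \<longleftrightarrow> (s,l',i') \<in> mirror_verts q \<and> l \<le> l' \<and> (i' - 1) div 2^(l' - l) = i - 1"
  by (simp add: blk_def)

lemma div2_step: "(J::nat) = 2*I - 1 \<or> J = 2*I \<Longrightarrow> 1 \<le> I \<Longrightarrow> (J - 1) div 2^(Suc k) = (I - 1) div 2^k"
proof -
  assume a: "J = 2*I - 1 \<or> J = 2*I" "1 \<le> I"
  have "(J - 1) div 2 = I - 1" using a by auto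
  moreover have "(J - 1) div 2^(Suc k) = (J - 1) div 2 div 2^k"
    by (simp add: div_mult2_eq)
  ultimately show ?thesis by simp
qed

lemma adj_cases:
  assumes "mirror_adj q u v"
  obtains s L I J where "L < q" "1 \<le> I" "I \<le> 2^L" "J = 2*I - 1 \<or> J = 2*I"
    "(u = canon q (s,L,I) \<and> v = canon q (s,Suc L,J)) \<or> (v = canon q (s,L,I) \<and> u = canon q (s,Suc L,J))"
  using assms unfolding mirror_adj_def doubleton_eq_iff by blast

lemma canon_mv: "L \<le> q \<Longrightarrow> 1 \<le> I \<Longrightarrow> I \<le> 2^L \<Longrightarrow> canon q (s,L,I) \<in> mirror_verts q"
  by (auto simp: canon_eq mv_iff)

lemma canon_blk: "canon q (s,L,I) \<in> blk q l j \<longleftrightarrow> canon q (s,L,I) \<in> mirror_verts q \<and> l \<le> L \<and> (I - 1) div 2^(L - l) = j - 1"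
  by (simp add: canon_eq blk_iff)

lemma cross:
  assumes "mirror_adj q u v" "u \<in> blk q m j" "v \<notin> blk q m j" and j1: "1 \<le> j"
  shows "\<exists>s I. 1 \<le> m \<and> u = canon q (s,m,j) \<and> v = canon q (s,m-1,I) \<and> (j - 1) div 2 = I - 1"
proof -
  obtain s L I J where h: "L < q" "1 \<le> I" "I \<le> 2^L" "J = 2*I - 1 \<or> J = 2*I"
    "(u = canon q (s,L,I) \<and> v = canon q (s,Suc L,J)) \<or> (v = canon q (s,L,I) \<and> u = canon q (s,Suc L,J))"
    by (rule adj_cases[OF assms(1)])
  have J1: "1 \<le> J" "J \<le> 2^Suc L" using h(2,3,4) by auto
  have mvA: "canon q (s,L,I) \<in> mirror_verts q" using h(1,2,3) by (intro canon_mv) auto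
  have mvB: "canon q (s,Suc L,J) \<in> mirror_verts q" using h(1) J1 by (intro canon_mv) auto
  have ds: "\<And>k. (J - 1) div 2^(Suc k) = (I - 1) div 2^k" using div2_step[OF h(4) h(2)] .
  from h(5) show ?thesis
  proof
    assume uv: "u = canon q (s,L,I) \<and> v = canon q (s,Suc L,J)"
    then have m1: "m \<le> L" and m2: "(I - 1) div 2^(L - m) = j - 1" using assms(2) canon_blk by blast+
    have "Suc L - m = Suc (L - m)" using m1 by simp
    then have "(J - 1) div 2^(Suc L - m) = j - 1" using ds m2 by simp
    then have "v \<in> blk q m j" using uv mvB m1 canon_blk[of q s "Suc L" J m j] by simp
    then show ?thesis using assms(3) by simp
  next
    assume uv: "v = canon q (s,L,I) \<and> u = canon q (s,Suc L,J)"
    then have m1: "m \<le> Suc L" and m2: "(J - 1) div 2^(Suc L - m) = j - 1" using assms(2) canon_blk by blast+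
    show ?thesis
    proof (cases "m \<le> L")
      case True
      then have "Suc L - m = Suc (L - m)" by simp
      then have "(I - 1) div 2^(L - m) = j - 1" using ds m2 by simp
      then have "v \<in> blk q m j" using uv mvA True canon_blk[of q s L I m j] by simp
      then show ?thesis using assms(3) by simp
    next
      case False
      then have mL: "m = Suc L" using m1 by simp
      then have "J - 1 = j - 1" using m2 by simp
      then have "J = j" using J1 j1 by simp
      have "(j - 1) div 2 = I - 1" using \<open>J = j\<close> h(4) h(2) by auto
      then show ?thesis using uv mL \<open>J = j\<close> by (intro exI[of _ s] exI[of _ I]) simp
    qed
  qed
qed

lemma blk_sub: "blk q l i \<subseteq> mirror_verts q" by (auto simp: blk_def)

lemma div_suc: "(x::nat) div 2^(Suc k) = x div 2^k div 2"
  by (simp only: power_Suc2 div_mult2_eq)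

lemma div2_cases: "(t::nat) div 2 = i - 1 \<Longrightarrow> 1 \<le> i \<Longrightarrow> t = (2*i-1) - 1 \<or> t = 2*i - 1"
  by presburger

lemma blk_decomp:
  assumes "l < q" "1 \<le> i" "i \<le> 2^l"
  shows "v \<in> blk q l i \<longleftrightarrow> v = (Blue,l,i) \<or> v = (Red,l,i) \<or> v \<in> blk q (Suc l) (2*i-1) \<or> v \<in> blk q (Suc l) (2*i)"
proof -
  obtain s l' i' where v: "v = (s,l',i')" by (cases v) auto
  show ?thesis
  proof
    assume "v \<in> blk q l i"
    then have m: "(s,l',i') \<in> mirror_verts q" "l \<le> l'" "(i'-1) div 2^(l'-l) = i-1" using v blk_iff by auto
    have i'1: "1 \<le> i'" using m(1) mv_iff by simp
    show "v = (Blue,l,i) \<or> v = (Red,l,i) \<or> v \<in> blk q (Suc l) (2*i-1) \<or> v \<in> blk q (Suc l) (2*i)"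
    proof (cases "l' = l")
      case True
      then have "i' = i" using m(3) i'1 assms(2) by simp
      then show ?thesis using v True by (cases s) auto
    next
      case False
      then have "l' - l = Suc (l' - Suc l)" using m(2) by simp
      then have "(i'-1) div 2^(l' - Suc l) div 2 = i - 1" using m(3) div_suc by metis
      then have "(i'-1) div 2^(l' - Suc l) = (2*i-1) - 1 \<or> (i'-1) div 2^(l' - Suc l) = 2*i-1"
        using div2_cases assms(2) by blast
      moreover have "Suc l \<le> l'" using False m(2) by simp
      ultimately show ?thesis using v m(1) blk_iff by auto
    qed
  next
    assume "v = (Blue,l,i) \<or> v = (Red,l,i) \<or> v \<in> blk q (Suc l) (2*i-1) \<or> v \<in> blk q (Suc l) (2*i)"
    then consider "v = (Blue,l,i)" | "v = (Red,l,i)" | c where "c = 2*i-1 \<or> c = 2*i" "v \<in> blk q (Suc l) c"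
      by blast
    then show "v \<in> blk q l i"
    proof cases
      case 1 then show ?thesis using assms by (simp add: blk_iff mv_iff)
    next
      case 2 then show ?thesis using assms by (simp add: blk_iff mv_iff)
    next
      case 3
      then have m: "(s,l',i') \<in> mirror_verts q" "Suc l \<le> l'" "(i'-1) div 2^(l'-Suc l) = c-1" using v blk_iff by auto
      have "l' - l = Suc (l' - Suc l)" using m(2) by simp
      then have "(i'-1) div 2^(l' - l) = (c-1) div 2" using m(3) div_suc by metis
      also have "\<dots> = i - 1" using 3(1) assms(2) by auto
      finally show ?thesis using v m blk_iff by auto
    qed
  qed
qed

lemma blk_leaf: "1 \<le> i \<Longrightarrow> i \<le> 2^q \<Longrightarrow> blk q q i = {(Blue,q,i)}"
proof
  assume a: "1 \<le> i" "i \<le> 2^q"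
  show "blk q q i \<subseteq> {(Blue,q,i)}"
  proof
    fix v assume "v \<in> blk q q i"
    moreover obtain s l' i' where v: "v = (s,l',i')" by (cases v) auto
    ultimately have m: "(s,l',i') \<in> mirror_verts q" "q \<le> l'" "(i'-1) div 2^(l'-q) = i-1" using blk_iff by auto
    then have "l' = q" "s = Blue" "1 \<le> i'" using mv_iff by auto
    then show "v \<in> {(Blue,q,i)}" using m(3) a v by auto
  qed
  show "{(Blue,q,i)} \<subseteq> blk q q i" using a by (simp add: blk_iff mv_iff)
qed

lemma blk_unique: "v \<in> blk q m j \<Longrightarrow> v \<in> blk q m j' \<Longrightarrow> 1 \<le> j \<Longrightarrow> 1 \<le> j' \<Longrightarrow> j = j'"
  by (cases v) (auto simp: blk_iff)

lemma lev_blk: "(s,l',i') \<in> blk q m j \<Longrightarrow> m \<le> l'"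
  by (simp add: blk_iff)

lemma adj_lev: "mirror_adj q u v \<Longrightarrow> fst (snd u) \<noteq> fst (snd v)"
  by (erule adj_cases) (auto simp: canon_eq split: if_splits)

lemma ch_bounds: "1 \<le> (i::nat) \<Longrightarrow> i \<le> 2^l \<Longrightarrow> c = 2*i-1 \<or> c = 2*i \<Longrightarrow> 1 \<le> c \<and> c \<le> 2^Suc l"
  by auto

lemma stay:
  assumes "l < q" "1 \<le> i" "i \<le> 2^l" "c = 2*i-1 \<or> c = 2*i"
  shows "wk (mirror_adj q) xs \<Longrightarrow> set xs \<subseteq> blk q l i - {(Blue,l,i),(Red,l,i)} \<Longrightarrow> xs \<noteq> []
     \<Longrightarrow> hd xs \<in> blk q (Suc l) c \<Longrightarrow> set xs \<subseteq> blk q (Suc l) c"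
proof (induction xs)
  case Nil then show ?case by simp
next
  case (Cons x xs)
  show ?case
  proof (cases xs)
    case Nil then show ?thesis using Cons.prems by simp
  next
    case (Cons y ys)
    have a: "mirror_adj q x y" using Cons.prems(1) \<open>xs = y#ys\<close> by simp
    have x: "x \<in> blk q (Suc l) c" using Cons.prems(4) by simp
    have y: "y \<in> blk q l i" "y \<noteq> (Blue,l,i)" "y \<noteq> (Red,l,i)" using Cons.prems(2) \<open>xs = y#ys\<close> by auto
    have c1: "1 \<le> c" using assms(2,4) by auto
    have yc: "y \<in> blk q (Suc l) c"
    proof (rule ccontr)
      assume "y \<notin> blk q (Suc l) c"
      from cross[OF a x this c1] obtain s' I where "y = canon q (s', l, I)" by auto
      then have yy: "y = (s',l,I)" using assms(1) by (simp add: canon_eq)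
      then have "I = i" using y(1) assms(2) by (auto simp: blk_iff mv_iff)
      then show False using yy y by (cases s') auto
    qed
    have "set xs \<subseteq> blk q (Suc l) c"
      using Cons.IH Cons.prems yc \<open>xs = y#ys\<close> by (simp add: wk_Cons)
    then show ?thesis using x by simp
  qed
qed

lemma enter:
  assumes "l < q" "1 \<le> i" "i \<le> 2^l" "wk (mirror_adj q) ((s,l,i) # xs)" "xs \<noteq> []"
    "set xs \<subseteq> blk q l i - {(Blue,l,i),(Red,l,i)}"
  obtains c where "c = 2*i-1 \<or> c = 2*i" "hd xs = canon q (s,Suc l,c)" "set xs \<subseteq> blk q (Suc l) c"
proof -
  have h: "hd xs \<in> blk q l i" "hd xs \<noteq> (Blue,l,i)" "hd xs \<noteq> (Red,l,i)" using assms(5,6) hd_in_set by blast+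
  then obtain c where c: "c = 2*i-1 \<or> c = 2*i" "hd xs \<in> blk q (Suc l) c"
    using blk_decomp[OF assms(1-3)] by blast
  have a: "mirror_adj q (hd xs) (s,l,i)" using assms(4,5) by (simp add: wk_Cons mirror_adj_sym)
  have nb: "(s,l,i) \<notin> blk q (Suc l) c" using lev_blk by fastforce
  have c1: "1 \<le> c" using assms(2) c(1) by auto
  from cross[OF a c(2) nb c1] obtain s' I where "hd xs = canon q (s',Suc l,c)" "(s,l,i) = canon q (s',l,I)"
    by auto
  moreover have "s' = s" using calculation(2) assms(1) by (simp add: canon_eq)
  ultimately have "hd xs = canon q (s,Suc l,c)" by simp
  moreover have "set xs \<subseteq> blk q (Suc l) c"
    using stay[OF assms(1-3) c(1)] assms(4-6) c(2) by (simp add: wk_Cons)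
  ultimately show ?thesis using that c(1) by blast
qed

lemma exit:
  assumes "l < q" "1 \<le> i" "i \<le> 2^l" "wk (mirror_adj q) (xs @ [(s,l,i)])" "xs \<noteq> []"
    "set xs \<subseteq> blk q l i - {(Blue,l,i),(Red,l,i)}"
  obtains c where "c = 2*i-1 \<or> c = 2*i" "last xs = canon q (s,Suc l,c)" "set xs \<subseteq> blk q (Suc l) c"
proof -
  have "wk (mirror_adj q) (rev (xs @ [(s,l,i)]))" using assms(4) wk_rev[of "mirror_adj q"] mirror_adj_sym by blast
  then have "wk (mirror_adj q) ((s,l,i) # rev xs)" by simp
  from enter[OF assms(1-3) this] assms(5,6) obtain c where
    "c = 2*i-1 \<or> c = 2*i" "hd (rev xs) = canon q (s,Suc l,c)" "set (rev xs) \<subseteq> blk q (Suc l) c" by auto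
  then show ?thesis using that by (simp add: hd_rev)
qed

definition gp :: "nat \<Rightarrow> nat \<Rightarrow> nat \<Rightarrow> mvert list \<Rightarrow> bool" where
  "gp q l i p \<longleftrightarrow> p \<noteq> [] \<and> distinct p \<and> set p \<subseteq> blk q l i \<and> wk (mirror_adj q) p"

fun oth :: "tree_side \<Rightarrow> tree_side" where
  "oth Blue = Red" | "oth Red = Blue"

lemma oth_roots: "{(s,l,i),(oth s,l,i)} = {(Blue,l,i),(Red,l,i)}"
  by (cases s) auto

lemma oth_ne: "(s,l,i) \<noteq> (oth s,l,i)"
  by (cases s) auto

lemma oth_oth[simp]: "oth (oth s) = s" by (cases s) auto

lemma leaf_len: "gp q q i p \<Longrightarrow> 1 \<le> i \<Longrightarrow> i \<le> 2^q \<Longrightarrow> length p \<le> 1"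
proof -
  assume a: "gp q q i p" "1 \<le> i" "i \<le> 2^q"
  then have "set p \<subseteq> {(Blue,q,i)}" "distinct p" using blk_leaf by (auto simp: gp_def)
  then have "card (set p) \<le> 1" "length p = card (set p)"
    using card_mono[of "{(Blue,q,i)}" "set p"] by (auto simp: distinct_card)
  then show ?thesis by simp
qed

lemma roots_nadj: "mirror_adj q (s,l,i) (s',l,i') \<Longrightarrow> False"
  using adj_lev by fastforce

lemma R_sub:
  assumes "set xs \<subseteq> blk q l i" "(s,l,i) \<notin> set xs" "(oth s,l,i) \<notin> set xs"
  shows "set xs \<subseteq> blk q l i - {(Blue,l,i),(Red,l,i)}"
  using assms by (cases s) auto

lemma gp_intro: "xs \<noteq> [] \<Longrightarrow> distinct xs \<Longrightarrow> set xs \<subseteq> blk q l i \<Longrightarrow> wk (mirror_adj q) xs \<Longrightarrow> gp q l i xs"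
  by (simp add: gp_def)

lemma A_bound:
  "q = l + h \<Longrightarrow> 1 \<le> i \<Longrightarrow> i \<le> 2^l \<Longrightarrow> gp q l i p \<Longrightarrow> hd p = canon q (s,l,i)
   \<Longrightarrow> last p = canon q (oth s,l,i) \<Longrightarrow> length p \<le> 2*h+1"
proof (induction h arbitrary: l i p s)
  case 0
  then show ?case using leaf_len by auto
next
  case (Suc h)
  have lq: "l < q" using Suc.prems(1) by simp
  have hp: "hd p = (s,l,i)" "last p = (oth s,l,i)" using Suc.prems(5,6) lq by (auto simp: canon_eq)
  have g: "p \<noteq> []" "distinct p" "set p \<subseteq> blk q l i" "wk (mirror_adj q) p" using Suc.prems(4) by (auto simp: gp_def)
  obtain p' where p: "p = (s,l,i) # p'" using g(1) hp(1) by (cases p) auto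
  have "p' \<noteq> []" using p hp(2) oth_ne[of s l i] by auto
  then have "last p' = (oth s,l,i)" using hp(2) p by simp
  then have p': "p' = butlast p' @ [(oth s,l,i)]" using \<open>p' \<noteq> []\<close> append_butlast_last_id by metis
  define x where "x = butlast p'"
  note p' = p'[folded x_def]
  have x0: "x \<noteq> []"
  proof
    assume "x = []"
    then have "mirror_adj q (s,l,i) (oth s,l,i)" using g(4) p p' by simp
    then show False using roots_nadj by blast
  qed
  have xd: "distinct x" "(s,l,i) \<notin> set x" "(oth s,l,i) \<notin> set x" "set x \<subseteq> blk q l i"
    using g(2,3) p p' by auto
  have xR: "set x \<subseteq> blk q l i - {(Blue,l,i),(Red,l,i)}" using R_sub xd by blast
  have w1: "wk (mirror_adj q) ((s,l,i) # x)" and w2: "wk (mirror_adj q) (x @ [(oth s,l,i)])"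
    and wx: "wk (mirror_adj q) x"
    using g(4) p p' by (auto simp: wk_append wk_Cons)
  obtain c where c: "c = 2*i-1 \<or> c = 2*i" "hd x = canon q (s,Suc l,c)" "set x \<subseteq> blk q (Suc l) c"
    using enter[OF lq Suc.prems(2,3) w1 x0 xR] by blast
  obtain c' where c': "c' = 2*i-1 \<or> c' = 2*i" "last x = canon q (oth s,Suc l,c')" "set x \<subseteq> blk q (Suc l) c'"
    using exit[OF lq Suc.prems(2,3) w2 x0 xR] by blast
  have "c = c'" using blk_unique[of "hd x" q "Suc l" c c'] c(3) c'(3) hd_in_set[OF x0]
        ch_bounds[OF Suc.prems(2,3) c(1)] ch_bounds[OF Suc.prems(2,3) c'(1)] by blast
  have cb: "1 \<le> c" "c \<le> 2^Suc l" using ch_bounds[OF Suc.prems(2,3) c(1)] by auto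
  have "length x \<le> 2*h+1"
    using Suc.IH[of "Suc l" c x s] Suc.prems(1) cb gp_intro[OF x0 xd(1) c(3) wx] c(2) c'(2) \<open>c = c'\<close> by simp
  then show ?case using p p' by simp
qed

lemma P_bound:
  "q = l + h \<Longrightarrow> 1 \<le> i \<Longrightarrow> i \<le> 2^l \<Longrightarrow> gp q l i p \<Longrightarrow> hd p = canon q (s,l,i)
   \<Longrightarrow> length p \<le> h*h + 2*h + 1"
proof (induction h arbitrary: l i p s)
  case 0
  then show ?case using leaf_len by auto
next
  case (Suc h)
  have lq: "l < q" using Suc.prems(1) by simp
  have hp: "hd p = (s,l,i)" using Suc.prems(5) lq by (auto simp: canon_eq)
  have g: "p \<noteq> []" "distinct p" "set p \<subseteq> blk q l i" "wk (mirror_adj q) p" using Suc.prems(4) by (auto simp: gp_def)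
  obtain p' where p: "p = (s,l,i) # p'" using g(1) hp(1) by (cases p) auto
  have sq: "Suc h * Suc h = h*h + 2*h + 1" by simp
  show ?case
  proof (cases "p' = []")
    case True then show ?thesis using p by simp
  next
    case p'0: False
    show ?thesis
    proof (cases "(oth s,l,i) \<in> set p'")
      case False
      have xd: "distinct p'" "(s,l,i) \<notin> set p'" "set p' \<subseteq> blk q l i" using g(2,3) p by auto
      have xR: "set p' \<subseteq> blk q l i - {(Blue,l,i),(Red,l,i)}" using R_sub xd False by blast
      have w1: "wk (mirror_adj q) ((s,l,i) # p')" and wx: "wk (mirror_adj q) p'" using g(4) p by (auto simp: wk_Cons)
      obtain c where c: "c = 2*i-1 \<or> c = 2*i" "hd p' = canon q (s,Suc l,c)" "set p' \<subseteq> blk q (Suc l) c"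
        using enter[OF lq Suc.prems(2,3) w1 p'0 xR] by blast
      have cb: "1 \<le> c" "c \<le> 2^Suc l" using ch_bounds[OF Suc.prems(2,3) c(1)] by auto
      have "length p' \<le> h*h + 2*h+1"
        using Suc.IH[of "Suc l" c p' s] Suc.prems(1) cb gp_intro[OF p'0 xd(1) c(3) wx] c(2) by simp
      then show ?thesis using p sq by simp
    next
      case True
      then obtain x y where p': "p' = x @ (oth s,l,i) # y" by (metis split_list)
      have x0: "x \<noteq> []"
      proof
        assume "x = []"
        then have "mirror_adj q (s,l,i) (oth s,l,i)" using g(4) p p' by simp
        then show False using roots_nadj by blast
      qed
      have xd: "distinct x" "(s,l,i) \<notin> set x" "(oth s,l,i) \<notin> set x" "set x \<subseteq> blk q l i"
        using g(2,3) p p' by auto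
      have xR: "set x \<subseteq> blk q l i - {(Blue,l,i),(Red,l,i)}" using R_sub xd by blast
      have w1: "wk (mirror_adj q) ((s,l,i) # x)" and w2: "wk (mirror_adj q) (x @ [(oth s,l,i)])"
        and wx: "wk (mirror_adj q) x" and w3: "wk (mirror_adj q) ((oth s,l,i) # y)" and wy: "wk (mirror_adj q) y"
        using g(4) p p' by (auto simp: wk_append wk_Cons)
      obtain c where c: "c = 2*i-1 \<or> c = 2*i" "hd x = canon q (s,Suc l,c)" "set x \<subseteq> blk q (Suc l) c"
        using enter[OF lq Suc.prems(2,3) w1 x0 xR] by blast
      obtain c' where c': "c' = 2*i-1 \<or> c' = 2*i" "last x = canon q (oth s,Suc l,c')" "set x \<subseteq> blk q (Suc l) c'"
        using exit[OF lq Suc.prems(2,3) w2 x0 xR] by blast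
      have "c = c'" using blk_unique[of "hd x" q "Suc l" c c'] c(3) c'(3) hd_in_set[OF x0]
        ch_bounds[OF Suc.prems(2,3) c(1)] ch_bounds[OF Suc.prems(2,3) c'(1)] by blast
      have cb: "1 \<le> c" "c \<le> 2^Suc l" using ch_bounds[OF Suc.prems(2,3) c(1)] by auto
      have lx: "length x \<le> 2*h+1"
        using A_bound[of q "Suc l" h c x s] Suc.prems(1) cb gp_intro[OF x0 xd(1) c(3) wx] c(2) c'(2) \<open>c = c'\<close> by simp
      have ly: "length y \<le> h*h + 2*h + 1"
      proof (cases "y = []")
        case True then show ?thesis by simp
      next
        case y0: False
        have yd: "distinct y" "(s,l,i) \<notin> set y" "(oth s,l,i) \<notin> set y" "set y \<subseteq> blk q l i"
          using g(2,3) p p' by auto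
        have yR: "set y \<subseteq> blk q l i - {(Blue,l,i),(Red,l,i)}" using R_sub yd by blast
        obtain d where d: "d = 2*i-1 \<or> d = 2*i" "hd y = canon q (oth s,Suc l,d)" "set y \<subseteq> blk q (Suc l) d"
          using enter[OF lq Suc.prems(2,3) w3 y0 yR] by blast
        have db: "1 \<le> d" "d \<le> 2^Suc l" using ch_bounds[OF Suc.prems(2,3) d(1)] by auto
        show ?thesis
          using Suc.IH[of "Suc l" d y "oth s"] Suc.prems(1) db gp_intro[OF y0 yd(1) d(3) wy] d(2) by simp
      qed
      show ?thesis using p p' lx ly sq by simp
    qed
  qed
qed

lemma D_bound:
  "q = l + h \<Longrightarrow> 1 \<le> i \<Longrightarrow> i \<le> 2^l \<Longrightarrow> gp q l i p1 \<Longrightarrow> gp q l i p2 \<Longrightarrow> set p1 \<inter> set p2 = {}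
   \<Longrightarrow> hd p1 = canon q (s,l,i) \<Longrightarrow> hd p2 = canon q (oth s,l,i)
   \<Longrightarrow> length p1 + length p2 \<le> 2*h*h + 2 \<and> 0 < h"
proof (induction h arbitrary: l i p1 p2 s)
  case 0
  then have "hd p1 = hd p2" by (simp add: canon_eq)
  moreover have "p1 \<noteq> []" "p2 \<noteq> []" using "0.prems"(4,5) by (auto simp: gp_def)
  ultimately have "hd p1 \<in> set p1 \<inter> set p2" by (metis IntI hd_in_set)
  then show ?case using "0.prems"(6) by simp
next
  case (Suc h)
  have lq: "l < q" using Suc.prems(1) by simp
  have sq: "Suc h * Suc h = h*h + 2*h + 1" by simp
  have hp: "hd p1 = (s,l,i)" "hd p2 = (oth s,l,i)" using Suc.prems(7,8) lq by (auto simp: canon_eq)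
  have g1: "p1 \<noteq> []" "distinct p1" "set p1 \<subseteq> blk q l i" "wk (mirror_adj q) p1" using Suc.prems(4) by (auto simp: gp_def)
  have g2: "p2 \<noteq> []" "distinct p2" "set p2 \<subseteq> blk q l i" "wk (mirror_adj q) p2" using Suc.prems(5) by (auto simp: gp_def)
  obtain x where p1: "p1 = (s,l,i) # x" using g1(1) hp(1) by (cases p1) auto
  obtain y where p2: "p2 = (oth s,l,i) # y" using g2(1) hp(2) by (cases p2) auto
  have xd: "distinct x" "(s,l,i) \<notin> set x" "(oth s,l,i) \<notin> set x" "set x \<subseteq> blk q l i"
    using g1(2,3) p1 p2 Suc.prems(6) by auto
  have yd: "distinct y" "(s,l,i) \<notin> set y" "(oth s,l,i) \<notin> set y" "set y \<subseteq> blk q l i"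
    using g2(2,3) p1 p2 Suc.prems(6) by auto
  have xR: "set x \<subseteq> blk q l i - {(Blue,l,i),(Red,l,i)}" using R_sub xd by blast
  have yR: "set y \<subseteq> blk q l i - {(Blue,l,i),(Red,l,i)}" using R_sub yd by blast
  have w1: "wk (mirror_adj q) ((s,l,i) # x)" and wx: "wk (mirror_adj q) x" using g1(4) p1 by (auto simp: wk_Cons)
  have w2: "wk (mirror_adj q) ((oth s,l,i) # y)" and wy: "wk (mirror_adj q) y" using g2(4) p2 by (auto simp: wk_Cons)
  have lx: "length x \<le> h*h + 2*h + 1" and ex: "x \<noteq> [] \<Longrightarrow> \<exists>c. (c = 2*i-1 \<or> c = 2*i) \<and> hd x = canon q (s,Suc l,c) \<and> set x \<subseteq> blk q (Suc l) c"
  proof -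
    show "x \<noteq> [] \<Longrightarrow> \<exists>c. (c = 2*i-1 \<or> c = 2*i) \<and> hd x = canon q (s,Suc l,c) \<and> set x \<subseteq> blk q (Suc l) c"
      using enter[OF lq Suc.prems(2,3) w1 _ xR] by metis
    show "length x \<le> h*h + 2*h + 1"
    proof (cases "x = []")
      case True then show ?thesis by simp
    next
      case x0: False
      obtain c where c: "c = 2*i-1 \<or> c = 2*i" "hd x = canon q (s,Suc l,c)" "set x \<subseteq> blk q (Suc l) c"
        using enter[OF lq Suc.prems(2,3) w1 x0 xR] by blast
      have cb: "1 \<le> c" "c \<le> 2^Suc l" using ch_bounds[OF Suc.prems(2,3) c(1)] by auto
      show ?thesis using P_bound[of q "Suc l" h c x s] Suc.prems(1) cb gp_intro[OF x0 xd(1) c(3) wx] c(2) by simp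
    qed
  qed
  have ly: "length y \<le> h*h + 2*h + 1" and ey: "y \<noteq> [] \<Longrightarrow> \<exists>c. (c = 2*i-1 \<or> c = 2*i) \<and> hd y = canon q (oth s,Suc l,c) \<and> set y \<subseteq> blk q (Suc l) c"
  proof -
    show "y \<noteq> [] \<Longrightarrow> \<exists>c. (c = 2*i-1 \<or> c = 2*i) \<and> hd y = canon q (oth s,Suc l,c) \<and> set y \<subseteq> blk q (Suc l) c"
      using enter[OF lq Suc.prems(2,3) w2 _ yR] by metis
    show "length y \<le> h*h + 2*h + 1"
    proof (cases "y = []")
      case True then show ?thesis by simp
    next
      case y0: False
      obtain c where c: "c = 2*i-1 \<or> c = 2*i" "hd y = canon q (oth s,Suc l,c)" "set y \<subseteq> blk q (Suc l) c"
        using enter[OF lq Suc.prems(2,3) w2 y0 yR] by blast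
      have cb: "1 \<le> c" "c \<le> 2^Suc l" using ch_bounds[OF Suc.prems(2,3) c(1)] by auto
      show ?thesis using P_bound[of q "Suc l" h c y "oth s"] Suc.prems(1) cb gp_intro[OF y0 yd(1) c(3) wy] c(2) by simp
    qed
  qed
  show ?case
  proof (cases "x = [] \<or> y = []")
    case True
    then show ?thesis using lx ly p1 p2 sq by auto
  next
    case False
    then have x0: "x \<noteq> []" and y0: "y \<noteq> []" by auto
    obtain c where c: "c = 2*i-1 \<or> c = 2*i" "hd x = canon q (s,Suc l,c)" "set x \<subseteq> blk q (Suc l) c"
      using ex[OF x0] by blast
    obtain d where d: "d = 2*i-1 \<or> d = 2*i" "hd y = canon q (oth s,Suc l,d)" "set y \<subseteq> blk q (Suc l) d"
      using ey[OF y0] by blast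
    show ?thesis
    proof (cases "c = d")
      case False
      then show ?thesis using lx ly p1 p2 sq by simp
    next
      case True
      have cb: "1 \<le> c" "c \<le> 2^Suc l" using ch_bounds[OF Suc.prems(2,3) c(1)] by auto
      have dis: "set x \<inter> set y = {}" using Suc.prems(6) p1 p2 by auto
      have "length x + length y \<le> 2*h*h + 2"
        using Suc.IH[of "Suc l" c x y s] Suc.prems(1) cb gp_intro[OF x0 xd(1) c(3) wx]
          gp_intro[OF y0 yd(1) d(3) wy] True c(2) d(2) dis by simp
      then show ?thesis using p1 p2 sq by simp
    qed
  qed
qed

lemma sq2: "2 * Suc h * Suc h = 2*h*h + 4*h + 2" by (simp add: algebra_simps)
lemma ar2: "(n::nat) \<le> 2*h*h+4*h+3 \<Longrightarrow> n \<le> max (2*Suc h*Suc h) 3 + 1"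
  unfolding sq2 by linarith
lemma ar1: "(n::nat) \<le> h*h+4*h+4 \<Longrightarrow> n \<le> max (2*Suc h*Suc h) 3 + 1"
proof (cases h)
  case 0 then show "n \<le> h*h+4*h+4 \<Longrightarrow> ?thesis" by simp
next
  case (Suc k)
  then have "1 \<le> h*h" by simp
  then show "n \<le> h*h+4*h+4 \<Longrightarrow> ?thesis" using ar2[of n h] by linarith
qed
lemma ar3: "(n::nat) \<le> max (2*h*h) 3 + 1 \<Longrightarrow> n \<le> max (2*Suc h*Suc h) 3 + 1"
proof -
  have "2*h*h \<le> 2*Suc h*Suc h" unfolding sq2 by linarith
  then show "(n::nat) \<le> max (2*h*h) 3 + 1 \<Longrightarrow> n \<le> max (2*Suc h*Suc h) 3 + 1" by linarith
qed

lemma F_bound: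
  "q = l + h \<Longrightarrow> 1 \<le> i \<Longrightarrow> i \<le> 2^l \<Longrightarrow> gp q l i p \<Longrightarrow> length p \<le> max (2*h*h) 3 + 1"
proof (induction h arbitrary: l i p)
  case 0
  then show ?case using leaf_len by fastforce
next
  case (Suc h)
  have lq: "l < q" using Suc.prems(1) by simp
  have g: "p \<noteq> []" "distinct p" "set p \<subseteq> blk q l i" "wk (mirror_adj q) p" using Suc.prems(4) by (auto simp: gp_def)
  have E: "length ys \<le> h*h+2*h+1 \<and> (\<exists>c. (c = 2*i-1 \<or> c = 2*i) \<and> hd ys = canon q (s,Suc l,c) \<and> set ys \<subseteq> blk q (Suc l) c)"
    if A: "ys \<noteq> []" "wk (mirror_adj q) ((s,l,i) # ys)" "distinct ys" "set ys \<subseteq> blk q l i"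
      "(s,l,i) \<notin> set ys" "(oth s,l,i) \<notin> set ys" for ys s
  proof -
    have yR: "set ys \<subseteq> blk q l i - {(Blue,l,i),(Red,l,i)}" using R_sub A by blast
    obtain c where c: "c = 2*i-1 \<or> c = 2*i" "hd ys = canon q (s,Suc l,c)" "set ys \<subseteq> blk q (Suc l) c"
      using enter[OF lq Suc.prems(2,3) A(2,1) yR] by blast
    have cb: "1 \<le> c" "c \<le> 2^Suc l" using ch_bounds[OF Suc.prems(2,3) c(1)] by auto
    have wy: "wk (mirror_adj q) ys" using A(2) by (simp add: wk_Cons)
    have "length ys \<le> h*h+2*h+1"
      using P_bound[of q "Suc l" h c ys s] Suc.prems(1) cb gp_intro[OF A(1,3) c(3) wy] c(2) by simp
    then show ?thesis using c by blast
  qed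
  have X: "length xs \<le> h*h+2*h+1 \<and> (\<exists>c. (c = 2*i-1 \<or> c = 2*i) \<and> last xs = canon q (s,Suc l,c) \<and> set xs \<subseteq> blk q (Suc l) c)"
    if B: "xs \<noteq> []" "wk (mirror_adj q) (xs @ [(s,l,i)])" "distinct xs" "set xs \<subseteq> blk q l i"
      "(s,l,i) \<notin> set xs" "(oth s,l,i) \<notin> set xs" for xs s
  proof -
    have "wk (mirror_adj q) (rev (xs @ [(s,l,i)]))" using B(2) wk_rev[of "mirror_adj q"] mirror_adj_sym by blast
    then have "wk (mirror_adj q) ((s,l,i) # rev xs)" by simp
    then show ?thesis using E[of "rev xs" s] B by (simp add: hd_rev)
  qed
  show ?case
  proof (cases "(Blue,l,i) \<in> set p \<or> (Red,l,i) \<in> set p")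
    case False
    then have pR: "set p \<subseteq> blk q l i - {(Blue,l,i),(Red,l,i)}" using g(3) by auto
    then have "hd p \<in> blk q l i - {(Blue,l,i),(Red,l,i)}" using hd_in_set[OF g(1)] by blast
    then obtain c where c: "c = 2*i-1 \<or> c = 2*i" "hd p \<in> blk q (Suc l) c"
      using blk_decomp[OF lq Suc.prems(2,3)] by blast
    have cb: "1 \<le> c" "c \<le> 2^Suc l" using ch_bounds[OF Suc.prems(2,3) c(1)] by auto
    have "set p \<subseteq> blk q (Suc l) c" using stay[OF lq Suc.prems(2,3) c(1) g(4) pR g(1) c(2)] .
    then have "length p \<le> max (2*h*h) 3 + 1"
      using Suc.IH[of "Suc l" c p] Suc.prems(1) cb gp_intro[OF g(1,2) _ g(4)] by simp
    then show ?thesis using ar3 by blast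
  next
    case True
    have C2: "length p \<le> max (2*Suc h*Suc h) 3 + 1" if C: "(s,l,i) \<in> set p" "(oth s,l,i) \<notin> set p" for s
    proof -
      obtain x y where p: "p = x @ (s,l,i) # y" using C(1) by (metis split_list)
      have d: "distinct x" "distinct y" "(s,l,i) \<notin> set x" "(s,l,i) \<notin> set y" "(oth s,l,i) \<notin> set x"
        "(oth s,l,i) \<notin> set y" "set x \<subseteq> blk q l i" "set y \<subseteq> blk q l i"
        using g(2,3) C(2) p by auto
      have w: "wk (mirror_adj q) (x @ [(s,l,i)])" "wk (mirror_adj q) ((s,l,i) # y)"
        using g(4) p by (auto simp: wk_append wk_Cons)
      have lx: "length x \<le> h*h+2*h+1"
        using X[of x s] w d by (cases "x = []") auto
      have ly: "length y \<le> h*h+2*h+1"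
        using E[of y s] w d by (cases "y = []") auto
      have "length p \<le> 2*h*h+4*h+3" using p lx ly by simp
      then show ?thesis using ar2 by blast
    qed
    have C3: "length p \<le> max (2*Suc h*Suc h) 3 + 1" if p: "p = x @ (s,l,i) # z @ (oth s,l,i) # y" for x y z s
    proof -
      have d: "distinct x" "distinct y" "distinct z" "(s,l,i) \<notin> set x" "(s,l,i) \<notin> set y" "(oth s,l,i) \<notin> set x"
        "(oth s,l,i) \<notin> set y" "set x \<subseteq> blk q l i" "set y \<subseteq> blk q l i"
        "(s,l,i) \<notin> set z" "(oth s,l,i) \<notin> set z" "set z \<subseteq> blk q l i"
        "set x \<inter> set z = {}" "set y \<inter> set z = {}" "set x \<inter> set y = {}"
        using g(2,3) p by auto
      have w: "wk (mirror_adj q) (x @ [(s,l,i)])" "wk (mirror_adj q) ((oth s,l,i) # y)"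
        "wk (mirror_adj q) ((s,l,i) # z)" "wk (mirror_adj q) (z @ [(oth s,l,i)])" "wk (mirror_adj q) z"
        "wk (mirror_adj q) x" "wk (mirror_adj q) y"
        using g(4) p by (auto simp: wk_append wk_Cons)
      have z0: "z \<noteq> []"
      proof
        assume "z = []"
        then have "wk (mirror_adj q) ((s,l,i) # (oth s,l,i) # y)" using g(4) p by (simp add: wk_append)
        then have "mirror_adj q (s,l,i) (oth s,l,i)" by simp
        then show False using roots_nadj by blast
      qed
      have zR: "set z \<subseteq> blk q l i - {(Blue,l,i),(Red,l,i)}" using R_sub d by blast
      obtain c where c: "c = 2*i-1 \<or> c = 2*i" "hd z = canon q (s,Suc l,c)" "set z \<subseteq> blk q (Suc l) c"
        using enter[OF lq Suc.prems(2,3) w(3) z0 zR] by blast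
      obtain c' where c': "c' = 2*i-1 \<or> c' = 2*i" "last z = canon q (oth s,Suc l,c')" "set z \<subseteq> blk q (Suc l) c'"
        using exit[OF lq Suc.prems(2,3) w(4) z0 zR] by blast
      have "c = c'" using blk_unique[of "hd z" q "Suc l" c c'] c(3) c'(3) hd_in_set[OF z0]
        ch_bounds[OF Suc.prems(2,3) c(1)] ch_bounds[OF Suc.prems(2,3) c'(1)] by blast
      have cb: "1 \<le> c" "c \<le> 2^Suc l" using ch_bounds[OF Suc.prems(2,3) c(1)] by auto
      have lz: "length z \<le> 2*h+1"
        using A_bound[of q "Suc l" h c z s] Suc.prems(1) cb gp_intro[OF z0 d(3) c(3) w(5)] c(2) c'(2) \<open>c = c'\<close> by simp
      have lx: "length x \<le> h*h+2*h+1"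
        using X[of x s] w d by (cases "x = []") auto
      have ly: "length y \<le> h*h+2*h+1"
        using E[of y "oth s"] w d by (cases "y = []") auto
      have lp: "length p = length x + length y + length z + 2" using p by simp
      show ?thesis
      proof (cases "x = [] \<or> y = []")
        case True
        then have "length p \<le> h*h+4*h+4" using lp lx ly lz by auto
        then show ?thesis using ar1 by blast
      next
        case False
        then have x0: "x \<noteq> []" and y0: "y \<noteq> []" by auto
        obtain cx where cx: "cx = 2*i-1 \<or> cx = 2*i" "last x = canon q (s,Suc l,cx)" "set x \<subseteq> blk q (Suc l) cx"
          using X[of x s] w d x0 by blast
        obtain cy where cy: "cy = 2*i-1 \<or> cy = 2*i" "hd y = canon q (oth s,Suc l,cy)" "set y \<subseteq> blk q (Suc l) cy"
          using E[of y "oth s"] w d y0 by auto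
        have "cx \<noteq> c"
        proof
          assume "cx = c"
          then have "last x = hd z" using cx(2) c(2) by simp
          then have "last x \<in> set x \<inter> set z" using last_in_set[OF x0] hd_in_set[OF z0] by simp
          then show False using d(13) by blast
        qed
        moreover have "cy \<noteq> c"
        proof
          assume "cy = c"
          then have "hd y = last z" using cy(2) c'(2) \<open>c = c'\<close> by simp
          then have "hd y \<in> set y \<inter> set z" using last_in_set[OF z0] hd_in_set[OF y0] by simp
          then show False using d(14) by blast
        qed
        ultimately have "cx = cy" using c(1) cx(1) cy(1) by auto
        have cxb: "1 \<le> cx" "cx \<le> 2^Suc l" using ch_bounds[OF Suc.prems(2,3) cx(1)] by auto
        have wrx: "wk (mirror_adj q) (rev x)" using w(6) wk_rev[of "mirror_adj q"] mirror_adj_sym by blast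
        have "length (rev x) + length y \<le> 2*h*h + 2 \<and> 0 < h"
          using D_bound[of q "Suc l" h cx "rev x" y s] Suc.prems(1) cxb
            gp_intro[of "rev x", OF _ _ _ wrx] gp_intro[OF y0 d(2) cy(3) w(7)] x0 d(1) cx(3) cx(2) cy(2) \<open>cx = cy\<close> d(15)
          by (simp add: hd_rev)
        then have "length p \<le> 2*h*h+4*h+3" using lp lz by simp
        then show ?thesis using ar2 by blast
      qed
    qed
    show ?thesis
    proof (cases "(Blue,l,i) \<in> set p \<and> (Red,l,i) \<in> set p")
      case False
      then show ?thesis using True C2[of Blue] C2[of Red] by auto
    next
      case both: True
      then obtain x w where pw: "p = x @ (Blue,l,i) # w" by (metis split_list)
      show ?thesis
      proof (cases "(Red,l,i) \<in> set w")
        case True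
        then obtain z y where "w = z @ (Red,l,i) # y" by (metis split_list)
        then show ?thesis using C3[of x Blue z y] pw by simp
      next
        case False
        then have "(Red,l,i) \<in> set x" using both pw by auto
        then obtain x1 x2 where "x = x1 @ (Red,l,i) # x2" by (metis split_list)
        then show ?thesis using C3[of x1 Red x2 w] pw by simp
      qed
    qed
  qed
qed

fun ap :: "nat \<Rightarrow> nat \<Rightarrow> tree_side \<Rightarrow> nat \<Rightarrow> nat \<Rightarrow> mvert list" where
  "ap q 0 s l i = [canon q (s,l,i)]"
| "ap q (Suc h) s l i = canon q (s,l,i) # ap q h s (Suc l) (2*i-1) @ [canon q (oth s,l,i)]"

fun pp :: "nat \<Rightarrow> nat \<Rightarrow> tree_side \<Rightarrow> nat \<Rightarrow> nat \<Rightarrow> mvert list" where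
  "pp q 0 s l i = [canon q (s,l,i)]"
| "pp q (Suc h) s l i = canon q (s,l,i) # ap q h s (Suc l) (2*i-1) @ canon q (oth s,l,i) # pp q h (oth s) (Suc l) (2*i)"

lemma adj_down: "l < q \<Longrightarrow> 1 \<le> i \<Longrightarrow> i \<le> 2^l \<Longrightarrow> c = 2*i-1 \<or> c = 2*i
  \<Longrightarrow> mirror_adj q (canon q (s,l,i)) (canon q (s,Suc l,c))"
  unfolding mirror_adj_def by (intro exI[of _ s] exI[of _ l] exI[of _ i] exI[of _ c]) auto

lemma root_in_blk: "l < q \<Longrightarrow> 1 \<le> i \<Longrightarrow> i \<le> 2^l \<Longrightarrow> (s,l,i) \<in> blk q l i"
  by (simp add: blk_iff mv_iff)

lemma child_sub: "l < q \<Longrightarrow> 1 \<le> i \<Longrightarrow> i \<le> 2^l \<Longrightarrow> c = 2*i-1 \<or> c = 2*i \<Longrightarrow> blk q (Suc l) c \<subseteq> blk q l i"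
  using blk_decomp by blast

lemma root_notin: "(s,l,i) \<notin> blk q (Suc l) c"
  using lev_blk by fastforce

lemma ap_props:
  "q = l + h \<Longrightarrow> 1 \<le> i \<Longrightarrow> i \<le> 2^l \<Longrightarrow> gp q l i (ap q h s l i) \<and> hd (ap q h s l i) = canon q (s,l,i)
    \<and> last (ap q h s l i) = canon q (oth s,l,i) \<and> length (ap q h s l i) = 2*h+1"
proof (induction h arbitrary: s l i)
  case 0
  then have "(Blue,q,i) \<in> blk q q i" using blk_leaf by simp
  then show ?case using 0 by (simp add: gp_def canon_eq)
next
  case (Suc h)
  have lq: "l < q" using Suc.prems(1) by simp
  have c: "2*i-1 = 2*i-1 \<or> 2*i-1 = 2*i" by simp
  have cb: "1 \<le> 2*i-1" "2*i-1 \<le> 2^Suc l" using ch_bounds[OF Suc.prems(2,3) c] by auto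
  define A where "A = ap q h s (Suc l) (2*i-1)"
  have IH: "gp q (Suc l) (2*i-1) A" "hd A = canon q (s,Suc l,2*i-1)" "last A = canon q (oth s,Suc l,2*i-1)"
    "length A = 2*h+1"
    using Suc.IH[of "Suc l" "2*i-1" s] Suc.prems(1) cb unfolding A_def by auto
  have ga: "A \<noteq> []" "distinct A" "set A \<subseteq> blk q (Suc l) (2*i-1)" "wk (mirror_adj q) A" using IH(1) by (auto simp: gp_def)
  have sub: "blk q (Suc l) (2*i-1) \<subseteq> blk q l i" using child_sub[OF lq Suc.prems(2,3) c] .
  have nA: "(s,l,i) \<notin> set A" "(oth s,l,i) \<notin> set A" using ga(3) root_notin by blast+
  have cn: "canon q (s,l,i) = (s,l,i)" "canon q (oth s,l,i) = (oth s,l,i)" using lq by (auto simp: canon_eq)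
  have a1: "mirror_adj q (s,l,i) (hd A)" using adj_down[OF lq Suc.prems(2,3) c, of s] IH(2) cn by simp
  have a2: "mirror_adj q (last A) (oth s,l,i)"
    using mirror_adj_sym[OF adj_down[OF lq Suc.prems(2,3) c, of "oth s"]] IH(3) cn by simp
  have r: "(s,l,i) \<in> blk q l i" "(oth s,l,i) \<in> blk q l i" using root_in_blk[OF lq Suc.prems(2,3)] by auto
  have "ap q (Suc h) s l i = (s,l,i) # A @ [(oth s,l,i)]" using cn A_def by simp
  moreover have "gp q l i ((s,l,i) # A @ [(oth s,l,i)])"
    unfolding gp_def using ga nA oth_ne[of s l i] sub r a1 a2 by (auto simp: wk_append wk_Cons)
  ultimately show ?case using IH(4) cn by simp
qed

lemma pp_props:
  "q = l + h \<Longrightarrow> 1 \<le> i \<Longrightarrow> i \<le> 2^l \<Longrightarrow> gp q l i (pp q h s l i) \<and> hd (pp q h s l i) = canon q (s,l,i)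
    \<and> length (pp q h s l i) = h*h+2*h+1"
proof (induction h arbitrary: s l i)
  case 0
  then have "(Blue,q,i) \<in> blk q q i" using blk_leaf by simp
  then show ?case using 0 by (simp add: gp_def canon_eq)
next
  case (Suc h)
  have lq: "l < q" using Suc.prems(1) by simp
  have c: "2*i-1 = 2*i-1 \<or> 2*i-1 = 2*i" by simp
  have d: "2*i = 2*i-1 \<or> 2*i = 2*i" by simp
  have cb: "1 \<le> 2*i-1" "2*i-1 \<le> 2^Suc l" using ch_bounds[OF Suc.prems(2,3) c] by auto
  have db: "1 \<le> 2*i" "2*i \<le> 2^Suc l" using ch_bounds[OF Suc.prems(2,3) d] by auto
  define A where "A = ap q h s (Suc l) (2*i-1)"
  define B where "B = pp q h (oth s) (Suc l) (2*i)"
  have IA: "gp q (Suc l) (2*i-1) A" "hd A = canon q (s,Suc l,2*i-1)" "last A = canon q (oth s,Suc l,2*i-1)"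
    "length A = 2*h+1"
    using ap_props[of q "Suc l" h "2*i-1" s] Suc.prems(1) cb unfolding A_def by auto
  have IB: "gp q (Suc l) (2*i) B" "hd B = canon q (oth s,Suc l,2*i)" "length B = h*h+2*h+1"
    using Suc.IH[of "Suc l" "2*i" "oth s"] Suc.prems(1) db unfolding B_def by auto
  have ga: "A \<noteq> []" "distinct A" "set A \<subseteq> blk q (Suc l) (2*i-1)" "wk (mirror_adj q) A" using IA(1) by (auto simp: gp_def)
  have gb: "B \<noteq> []" "distinct B" "set B \<subseteq> blk q (Suc l) (2*i)" "wk (mirror_adj q) B" using IB(1) by (auto simp: gp_def)
  have subA: "blk q (Suc l) (2*i-1) \<subseteq> blk q l i" using child_sub[OF lq Suc.prems(2,3) c] .
  have subB: "blk q (Suc l) (2*i) \<subseteq> blk q l i" using child_sub[OF lq Suc.prems(2,3) d] .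
  have nA: "(s,l,i) \<notin> set A" "(oth s,l,i) \<notin> set A" using ga(3) root_notin by blast+
  have nB: "(s,l,i) \<notin> set B" "(oth s,l,i) \<notin> set B" using gb(3) root_notin by blast+
  have AB: "set A \<inter> set B = {}"
  proof (rule ccontr)
    assume "set A \<inter> set B \<noteq> {}"
    then obtain v where "v \<in> blk q (Suc l) (2*i-1)" "v \<in> blk q (Suc l) (2*i)" using ga(3) gb(3) by blast
    then have "2*i-1 = 2*i" using blk_unique cb(1) db(1) by blast
    then show False using Suc.prems(2) by simp
  qed
  have cn: "canon q (s,l,i) = (s,l,i)" "canon q (oth s,l,i) = (oth s,l,i)" using lq by (auto simp: canon_eq)
  have a1: "mirror_adj q (s,l,i) (hd A)" using adj_down[OF lq Suc.prems(2,3) c, of s] IA(2) cn by simp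
  have a2: "mirror_adj q (last A) (oth s,l,i)"
    using mirror_adj_sym[OF adj_down[OF lq Suc.prems(2,3) c, of "oth s"]] IA(3) cn by simp
  have a3: "mirror_adj q (oth s,l,i) (hd B)" using adj_down[OF lq Suc.prems(2,3) d, of "oth s"] IB(2) cn by simp
  have r: "(s,l,i) \<in> blk q l i" "(oth s,l,i) \<in> blk q l i" using root_in_blk[OF lq Suc.prems(2,3)] by auto
  have "pp q (Suc h) s l i = (s,l,i) # A @ (oth s,l,i) # B" using cn A_def B_def by simp
  moreover have "gp q l i ((s,l,i) # A @ (oth s,l,i) # B)"
    unfolding gp_def using ga gb nA nB AB oth_ne[of s l i] subA subB r a1 a2 a3 by (auto simp: wk_append wk_Cons)
  ultimately show ?case using IA(4) IB(3) cn by simp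
qed

lemma mv_blk0: "mirror_verts q \<subseteq> blk q 0 1"
proof
  fix v assume v: "v \<in> mirror_verts q"
  obtain s l' i' where vv: "v = (s,l',i')" by (cases v) auto
  then have "i' \<le> 2^l'" "1 \<le> i'" using v mv_iff by auto
  then have "(i'-1) div 2^l' = 0" by simp
  then show "v \<in> blk q 0 1" using v vv by (simp add: blk_iff)
qed

lemma finite_mv: "finite (mirror_verts q)"
proof -
  have "union_verts q \<subseteq> {Blue,Red} \<times> ({..q} \<times> {..(2::nat)^q})"
  proof
    fix v assume v: "v \<in> union_verts q"
    obtain s l i where vv: "v = (s,l,i)" by (cases v) auto
    have "l \<le> q" "i \<le> 2^l" using v vv by (auto simp: union_verts_def)
    moreover have "(2::nat)^l \<le> 2^q" using \<open>l \<le> q\<close> by (simp add: power_increasing)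
    ultimately have "i \<le> 2^q" by linarith
    then show "v \<in> {Blue,Red} \<times> ({..q} \<times> {..(2::nat)^q})" using vv \<open>l \<le> q\<close> by (cases s) auto
  qed
  then have "finite (union_verts q)" using finite_subset by blast
  then show ?thesis unfolding mirror_verts_def by simp
qed

theorem mainTheorem19:
  fixes q :: nat
  assumes "q \<ge> 3"
  shows "Max (path_len ` {p. mirror_path q p}) = 2 * q ^ 2"
proof (rule Max_eqI)
  have "{p. mirror_path q p} \<subseteq> {xs. set xs \<subseteq> mirror_verts q \<and> length xs \<le> card (mirror_verts q)}"
  proof
    fix p assume "p \<in> {p. mirror_path q p}"
    then have "distinct p" "set p \<subseteq> mirror_verts q" by (auto simp: mirror_path_def)
    then show "p \<in> {xs. set xs \<subseteq> mirror_verts q \<and> length xs \<le> card (mirror_verts q)}"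
    proof -
      have "length p = card (set p)" using \<open>distinct p\<close> distinct_card by metis
      also have "\<dots> \<le> card (mirror_verts q)" using card_mono[OF finite_mv \<open>set p \<subseteq> mirror_verts q\<close>] .
      finally show ?thesis using \<open>set p \<subseteq> mirror_verts q\<close> by simp
    qed
  qed
  then have "finite {p. mirror_path q p}"
    using finite_subset finite_lists_length_le[OF finite_mv] by blast
  then show "finite (path_len ` {p. mirror_path q p})" by simp
next
  fix y assume "y \<in> path_len ` {p. mirror_path q p}"
  then obtain p where p: "mirror_path q p" "y = path_len p" by auto
  then have "gp q 0 1 p" using mv_blk0 by (auto simp: mirror_path_wk gp_def)
  then have "length p \<le> max (2*q*q) 3 + 1" using F_bound[of q 0 q 1 p] by simp
  moreover have "3*3 \<le> q*q" using mult_le_mono[OF assms assms] by simp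
  then have "3 \<le> 2*q*q" by linarith
  ultimately show "y \<le> 2 * q ^ 2" using p(2) by (simp add: path_len_def power2_eq_square)
next
  define P1 where "P1 = pp q (q-1) Blue 1 1"
  define P2 where "P2 = pp q (q-1) Blue 1 2"
  have qq: "q = 1 + (q - 1)" using assms by simp
  have I1: "gp q 1 1 P1" "hd P1 = canon q (Blue,1,1)" "length P1 = (q-1)*(q-1)+2*(q-1)+1"
    using pp_props[OF qq, of 1 Blue] unfolding P1_def by auto
  have I2: "gp q 1 2 P2" "hd P2 = canon q (Blue,1,2)" "length P2 = (q-1)*(q-1)+2*(q-1)+1"
    using pp_props[OF qq, of 2 Blue] unfolding P2_def by auto
  have g1: "P1 \<noteq> []" "distinct P1" "set P1 \<subseteq> blk q 1 1" "wk (mirror_adj q) P1" using I1(1) by (auto simp: gp_def)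
  have g2: "P2 \<noteq> []" "distinct P2" "set P2 \<subseteq> blk q 1 2" "wk (mirror_adj q) P2" using I2(1) by (auto simp: gp_def)
  have q0: "0 < q" using assms by simp
  have D12: "set P1 \<inter> set P2 = {}"
  proof (rule ccontr)
    assume "set P1 \<inter> set P2 \<noteq> {}"
    then obtain v where "v \<in> blk q 1 1" "v \<in> blk q 1 2" using g1(3) g2(3) by blast
    then have "(1::nat) = 2" using blk_unique[of v q 1 1 2] by simp
    then show False by simp
  qed
  have n1: "(Blue,0,1) \<notin> set P1" using g1(3) root_notin[of Blue 0 1 q 1] by auto
  have n2: "(Blue,0,1) \<notin> set P2" using g2(3) root_notin[of Blue 0 1 q 2] by auto
  have a1: "mirror_adj q (canon q (Blue,0,1)) (canon q (Blue,Suc 0,1))" using adj_down[OF q0, of 1 1 Blue] by simp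
  have a2: "mirror_adj q (canon q (Blue,0,1)) (canon q (Blue,Suc 0,2))" using adj_down[OF q0, of 1 2 Blue] by simp
  have cn: "canon q (Blue,0,1) = (Blue,0,1)" using q0 by (simp add: canon_eq)
  define F where "F = rev P1 @ (Blue,0,1) # P2"
  have wr: "wk (mirror_adj q) (rev P1)" using g1(4) wk_rev[of "mirror_adj q"] mirror_adj_sym by blast
  have "wk (mirror_adj q) F" unfolding F_def
    using wr g2(4) g1(1) g2(1) I1(2) I2(2) mirror_adj_sym[OF a1] a2 cn
    by (simp add: wk_append wk_Cons last_rev)
  moreover have "distinct F" unfolding F_def using g1(2) g2(2) D12 n1 n2 by auto
  moreover have "set F \<subseteq> mirror_verts q" unfolding F_def
    using g1(3) g2(3) blk_sub[of q 1 1] blk_sub[of q 1 2] q0 by (auto simp: mv_iff)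
  ultimately have "mirror_path q F" unfolding mirror_path_wk F_def by simp
  moreover have "path_len F = 2 * q^2"
  proof -
    have "length F = 2*((q-1)*(q-1)+2*(q-1)+1) + 1" unfolding F_def using I1(3) I2(3) by simp
    also have "(q-1)*(q-1)+2*(q-1)+1 = q*q" using q0 by (cases q) auto
    finally show ?thesis by (simp add: path_len_def power2_eq_square)
  qed
  ultimately show "2 * q^2 \<in> path_len ` {p. mirror_path q p}" by (metis (mono_tags) image_eqI mem_Collect_eq)
qed

end
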